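(* Let $G$ be a finitely generated group and $\Omega\le\Lambda\le\operatorname{Aut}(G)$ with $\Omega$ of finite index in $\Lambda$. Then $\alpha_{G^\Omega}\sim\alpha_{G^\Lambda}$.
   Context: Fix a finite generating set $\Sigma$ of $G$. For $\Omega\le\operatorname{Aut}(G)$, the $\Omega$-automorphic growth function sends $n$ to the number of $\Omega$-orbits of $G$ containing an element of word length at most $n$ with respect to $\Sigma$; $\alpha_{G^\Omega}$ is its $\sim$-class. For non-decreasing non-zero $f,g\colon\mathbb{N}\to\mathbb{N}$, $f\preccurlyeq g$ means there is $\lambda\in\mathbb{N}\setminus\{0\}$ with $f(n)\le\lambda g(\lambda n+\lambda)+\lambda$ for all $n$, and $f\sim g$ means $f\preccurlyeq g$ and $g\preccurlyeq f$. *)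

theory Defs
  imports "HOL-Algebra.Algebra"
begin

definition word_ball :: "('a, 'b) monoid_scheme \<Rightarrow> 'a set \<Rightarrow> nat \<Rightarrow> 'a set" where
  "word_ball G S n = {g. \<exists>ws. length ws \<le> n \<and> set ws \<subseteq> S \<union> (\<lambda>x. inv\<^bsub>G\<^esub> x) ` S
                          \<and> foldr (\<lambda>x y. x \<otimes>\<^bsub>G\<^esub> y) ws \<one>\<^bsub>G\<^esub> = g}"

definition aut_orbit :: "('a \<Rightarrow> 'a) set \<Rightarrow> 'a \<Rightarrow> 'a set" where
  "aut_orbit \<Omega> g = (\<lambda>\<phi>. \<phi> g) ` \<Omega>"

definition aut_growth :: "('a, 'b) monoid_scheme \<Rightarrow> 'a set \<Rightarrow> ('a \<Rightarrow> 'a) set \<Rightarrow> nat \<Rightarrow> nat" where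
  "aut_growth G S \<Omega> n = card {Orb. Orb \<in> aut_orbit \<Omega> ` carrier G \<and> Orb \<inter> word_ball G S n \<noteq> {}}"

definition growth_le :: "(nat \<Rightarrow> nat) \<Rightarrow> (nat \<Rightarrow> nat) \<Rightarrow> bool" (infix "\<preceq>\<^sub>g" 50) where
  "f \<preceq>\<^sub>g g \<longleftrightarrow> (\<exists>c::nat. c \<noteq> 0 \<and> (\<forall>n. f n \<le> c * g (c * n + c) + c))"

definition growth_equiv :: "(nat \<Rightarrow> nat) \<Rightarrow> (nat \<Rightarrow> nat) \<Rightarrow> bool" (infix "\<sim>\<^sub>g" 50) where
  "f \<sim>\<^sub>g g \<longleftrightarrow> f \<preceq>\<^sub>g g \<and> g \<preceq>\<^sub>g f"

end

theory Submission
  imports Defs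
begin

lemma auto_in_carrier:
  assumes "f \<in> auto G" "x \<in> carrier G" shows "f x \<in> carrier G"
  using assms by (auto simp: auto_def Bij_def bij_betw_def)

lemma AutoGroup_mult_app:
  assumes "f \<in> auto G" "h \<in> auto G" "x \<in> carrier G"
  shows "(f \<otimes>\<^bsub>AutoGroup G\<^esub> h) x = f (h x)"
  using assms by (auto simp: AutoGroup_def BijGroup_def auto_def compose_def)

lemma AutoGroup_one_app:
  assumes "x \<in> carrier G" shows "\<one>\<^bsub>AutoGroup G\<^esub> x = x"
  using assms by (auto simp: AutoGroup_def BijGroup_def)

lemma AutoGroup_carrier: "carrier (AutoGroup G) = auto G"
  by (simp add: AutoGroup_def)

lemma orbit_shift:
  assumes G: "group G" and K: "subgroup K (AutoGroup G)" and g: "g \<in> carrier G" and w: "\<omega> \<in> K"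
  shows "aut_orbit K (\<omega> g) = aut_orbit K g"
proof -
  interpret A: group "AutoGroup G" using G by (rule group.AutoGroup)
  have Ksub: "K \<subseteq> auto G" using subgroup.subset[OF K] by (simp add: AutoGroup_carrier)
  have wa: "\<omega> \<in> auto G" using w Ksub by auto
  show ?thesis
  proof
    show "aut_orbit K (\<omega> g) \<subseteq> aut_orbit K g"
    proof
      fix y assume "y \<in> aut_orbit K (\<omega> g)"
      then obtain \<psi> where p: "\<psi> \<in> K" "y = \<psi> (\<omega> g)" by (auto simp: aut_orbit_def)
      have "\<psi> \<otimes>\<^bsub>AutoGroup G\<^esub> \<omega> \<in> K" by (rule subgroup.m_closed[OF K p(1) w])
      moreover have "(\<psi> \<otimes>\<^bsub>AutoGroup G\<^esub> \<omega>) g = y"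
        using AutoGroup_mult_app[of \<psi> G \<omega> g] p Ksub wa g by auto
      ultimately show "y \<in> aut_orbit K g" unfolding aut_orbit_def by (metis image_eqI)
    qed
  next
    show "aut_orbit K g \<subseteq> aut_orbit K (\<omega> g)"
    proof
      fix y assume "y \<in> aut_orbit K g"
      then obtain \<psi> where p: "\<psi> \<in> K" "y = \<psi> g" by (auto simp: aut_orbit_def)
      have iw: "inv\<^bsub>AutoGroup G\<^esub> \<omega> \<in> K" by (rule subgroup.m_inv_closed[OF K w])
      have iwa: "inv\<^bsub>AutoGroup G\<^esub> \<omega> \<in> auto G" using iw Ksub by auto
      have "\<psi> \<otimes>\<^bsub>AutoGroup G\<^esub> inv\<^bsub>AutoGroup G\<^esub> \<omega> \<in> K" by (rule subgroup.m_closed[OF K p(1) iw])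
      moreover have "(\<psi> \<otimes>\<^bsub>AutoGroup G\<^esub> inv\<^bsub>AutoGroup G\<^esub> \<omega>) (\<omega> g) = y"
      proof -
        have "(inv\<^bsub>AutoGroup G\<^esub> \<omega>) (\<omega> g) = (inv\<^bsub>AutoGroup G\<^esub> \<omega> \<otimes>\<^bsub>AutoGroup G\<^esub> \<omega>) g"
          using AutoGroup_mult_app[OF iwa wa g] by simp
        also have "\<dots> = g" using A.l_inv[of \<omega>] wa AutoGroup_one_app[OF g] by (simp add: AutoGroup_carrier)
        finally have "(inv\<^bsub>AutoGroup G\<^esub> \<omega>) (\<omega> g) = g" .
        show ?thesis
        proof -
          have pa: "\<psi> \<in> auto G" using p(1) Ksub by auto
          have "(\<psi> \<otimes>\<^bsub>AutoGroup G\<^esub> inv\<^bsub>AutoGroup G\<^esub> \<omega>) (\<omega> g) = \<psi> ((inv\<^bsub>AutoGroup G\<^esub> \<omega>) (\<omega> g))"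
            by (rule AutoGroup_mult_app[OF pa iwa auto_in_carrier[OF wa g]])
          then show ?thesis using \<open>(inv\<^bsub>AutoGroup G\<^esub> \<omega>) (\<omega> g) = g\<close> p(2) by simp
        qed
      qed
      ultimately show "y \<in> aut_orbit K (\<omega> g)" unfolding aut_orbit_def by (metis image_eqI)
    qed
  qed
qed

lemma orbit_self:
  assumes K: "subgroup K (AutoGroup G)" and g: "g \<in> carrier G"
  shows "g \<in> aut_orbit K g"
proof -
  have "\<one>\<^bsub>AutoGroup G\<^esub> \<in> K" by (rule subgroup.one_closed[OF K])
  then show ?thesis using AutoGroup_one_app[OF g] unfolding aut_orbit_def by (metis image_eqI)
qed

lemma orbit_mem_eq:
  assumes G: "group G" and K: "subgroup K (AutoGroup G)" and g: "g \<in> carrier G"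
    and x: "x \<in> aut_orbit K g"
  shows "aut_orbit K x = aut_orbit K g"
  using x orbit_shift[OF G K g] unfolding aut_orbit_def by auto

lemma word_ball_carrier:
  assumes G: "group G" and S: "S \<subseteq> carrier G"
  shows "word_ball G S n \<subseteq> carrier G"
proof
  fix g assume "g \<in> word_ball G S n"
  then obtain ws where ws: "set ws \<subseteq> S \<union> (\<lambda>x. inv\<^bsub>G\<^esub> x) ` S"
      "foldr (\<lambda>x y. x \<otimes>\<^bsub>G\<^esub> y) ws \<one>\<^bsub>G\<^esub> = g" by (auto simp: word_ball_def)
  interpret group G by (rule G)
  have "set ws \<subseteq> carrier G" using ws(1) S by auto
  then have "foldr (\<lambda>x y. x \<otimes>\<^bsub>G\<^esub> y) ws \<one>\<^bsub>G\<^esub> \<in> carrier G"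
    by (induction ws) auto
  then show "g \<in> carrier G" using ws by simp
qed

lemma word_ball_finite:
  assumes S: "finite S"
  shows "finite (word_ball G S n)"
proof -
  let ?T = "S \<union> (\<lambda>x. inv\<^bsub>G\<^esub> x) ` S"
  have "word_ball G S n = (\<lambda>ws. foldr (\<lambda>x y. x \<otimes>\<^bsub>G\<^esub> y) ws \<one>\<^bsub>G\<^esub>) ` {ws. set ws \<subseteq> ?T \<and> length ws \<le> n}"
    by (auto simp: word_ball_def)
  moreover have "finite {ws. set ws \<subseteq> ?T \<and> length ws \<le> n}"
    using S by (intro finite_lists_length_le) auto
  ultimately show ?thesis by simp
qed

lemma word_ball_mono: "n \<le> m \<Longrightarrow> word_ball G S n \<subseteq> word_ball G S m"
  unfolding word_ball_def using le_trans by blast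

lemma aut_growth_eq:
  assumes G: "group G" and S: "S \<subseteq> carrier G" and K: "subgroup K (AutoGroup G)"
  shows "aut_growth G S K n = card (aut_orbit K ` word_ball G S n)"
proof -
  have "{Orb. Orb \<in> aut_orbit K ` carrier G \<and> Orb \<inter> word_ball G S n \<noteq> {}} = aut_orbit K ` word_ball G S n"
  proof
    show "{Orb. Orb \<in> aut_orbit K ` carrier G \<and> Orb \<inter> word_ball G S n \<noteq> {}} \<subseteq> aut_orbit K ` word_ball G S n"
    proof
      fix Q assume "Q \<in> {Orb. Orb \<in> aut_orbit K ` carrier G \<and> Orb \<inter> word_ball G S n \<noteq> {}}"
      then obtain g x where g: "g \<in> carrier G" "Q = aut_orbit K g" "x \<in> Q" "x \<in> word_ball G S n" by auto
      then have "Q = aut_orbit K x" using orbit_mem_eq[OF G K g(1)] by simp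
      then show "Q \<in> aut_orbit K ` word_ball G S n" using g by auto
    qed
  next
    show "aut_orbit K ` word_ball G S n \<subseteq> {Orb. Orb \<in> aut_orbit K ` carrier G \<and> Orb \<inter> word_ball G S n \<noteq> {}}"
      using word_ball_carrier[OF G S] orbit_self[OF K] by blast
  qed
  then show ?thesis by (simp add: aut_growth_def)
qed


lemma orbit_card_mono:
  assumes "finite S" "n \<le> m"
  shows "card (aut_orbit K ` word_ball G S n) \<le> card (aut_orbit K ` word_ball G S m)"
  using assms word_ball_mono[of n m G S] word_ball_finite[of S G m]
  by (intro card_mono) auto

lemma dir1:
  assumes G: "group G" and S: "S \<subseteq> carrier G" "finite S"
    and L: "subgroup \<Lambda> (AutoGroup G)" and O: "subgroup \<Omega> (AutoGroup G)" and sub: "\<Omega> \<subseteq> \<Lambda>"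
  shows "card (aut_orbit \<Lambda> ` word_ball G S n) \<le> card (aut_orbit \<Omega> ` word_ball G S n)"
proof -
  let ?B = "word_ball G S n"
  let ?F = "\<lambda>Q. aut_orbit \<Lambda> (SOME x. x \<in> Q)"
  have "aut_orbit \<Lambda> ` ?B \<subseteq> ?F ` (aut_orbit \<Omega> ` ?B)"
  proof
    fix z assume "z \<in> aut_orbit \<Lambda> ` ?B"
    then obtain x where x: "x \<in> ?B" "z = aut_orbit \<Lambda> x" by auto
    have xc: "x \<in> carrier G" using x word_ball_carrier[OF G S(1)] by auto
    have "x \<in> aut_orbit \<Omega> x" using orbit_self[OF O xc] .
    then have "(SOME y. y \<in> aut_orbit \<Omega> x) \<in> aut_orbit \<Omega> x" by (rule someI)
    moreover have "aut_orbit \<Omega> x \<subseteq> aut_orbit \<Lambda> x" using sub by (auto simp: aut_orbit_def)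
    ultimately have "?F (aut_orbit \<Omega> x) = z" using orbit_mem_eq[OF G L xc] x by auto
    then show "z \<in> ?F ` (aut_orbit \<Omega> ` ?B)" using x by blast
  qed
  then have "card (aut_orbit \<Lambda> ` ?B) \<le> card (?F ` (aut_orbit \<Omega> ` ?B))"
    using word_ball_finite[OF S(2)] by (intro card_mono finite_imageI) auto
  also have "\<dots> \<le> card (aut_orbit \<Omega> ` ?B)"
    using word_ball_finite[OF S(2)] by (intro card_image_le) auto
  finally show ?thesis .
qed

lemma dir2:
  assumes G: "group G" and S: "S \<subseteq> carrier G" "finite S"
    and L: "subgroup \<Lambda> (AutoGroup G)" and O: "subgroup \<Omega> (AutoGroup G)" and sub: "\<Omega> \<subseteq> \<Lambda>"
    and R: "finite (rcosets\<^bsub>(AutoGroup G)\<lparr>carrier := \<Lambda>\<rparr>\<^esub> \<Omega>)"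
  shows "card (aut_orbit \<Omega> ` word_ball G S n) \<le>
     card (rcosets\<^bsub>(AutoGroup G)\<lparr>carrier := \<Lambda>\<rparr>\<^esub> \<Omega>) * card (aut_orbit \<Lambda> ` word_ball G S n)"
proof -
  let ?A = "AutoGroup G"
  let ?H = "(AutoGroup G)\<lparr>carrier := \<Lambda>\<rparr>"
  let ?R = "rcosets\<^bsub>?H\<^esub> \<Omega>"
  let ?B = "word_ball G S n"
  define r where "r Q = (SOME y. y \<in> ?B \<and> aut_orbit \<Lambda> y = Q)" for Q
  define F where "F = (\<lambda>(Q, C). aut_orbit \<Omega> ((SOME l. l \<in> C) (r Q)))"
  interpret A: group ?A using G by (rule group.AutoGroup)
  have Ls: "\<Lambda> \<subseteq> auto G" using subgroup.subset[OF L] by (simp add: AutoGroup_carrier)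
  have Os: "\<Omega> \<subseteq> auto G" using subgroup.subset[OF O] by (simp add: AutoGroup_carrier)
  have fin: "finite ?B" using word_ball_finite[OF S(2)] .
  have "aut_orbit \<Omega> ` ?B \<subseteq> F ` (aut_orbit \<Lambda> ` ?B \<times> ?R)"
  proof
    fix z assume "z \<in> aut_orbit \<Omega> ` ?B"
    then obtain x where x: "x \<in> ?B" "z = aut_orbit \<Omega> x" by auto
    have xc: "x \<in> carrier G" using x word_ball_carrier[OF G S(1)] by auto
    define y where "y = r (aut_orbit \<Lambda> x)"
    have "y \<in> ?B \<and> aut_orbit \<Lambda> y = aut_orbit \<Lambda> x"
      unfolding y_def r_def by (rule someI[where x = x]) (simp add: x(1))
    then have y: "y \<in> ?B" "aut_orbit \<Lambda> y = aut_orbit \<Lambda> x" by auto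
    have yc: "y \<in> carrier G" using y word_ball_carrier[OF G S(1)] by auto
    have "x \<in> aut_orbit \<Lambda> y" using y(2) orbit_self[OF L xc] by simp
    then obtain la where lam: "la \<in> \<Lambda>" "x = la y" by (auto simp: aut_orbit_def)
    define C where "C = \<Omega> #>\<^bsub>?H\<^esub> la"
    have CR: "C \<in> ?R" unfolding C_def RCOSETS_def using lam by auto
    have "\<one>\<^bsub>?A\<^esub> \<in> \<Omega>" by (rule subgroup.one_closed[OF O])
    moreover have "\<one>\<^bsub>?A\<^esub> \<otimes>\<^bsub>?A\<^esub> la = la" using lam Ls A.l_one by (auto simp: AutoGroup_carrier)
    ultimately have "la \<in> C" unfolding C_def r_coset_def by force
    then have "(SOME l. l \<in> C) \<in> C" by (rule someI[where P="\<lambda>l. l \<in> C"])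
    then obtain \<omega> where w: "\<omega> \<in> \<Omega>" "(SOME l. l \<in> C) = \<omega> \<otimes>\<^bsub>?A\<^esub> la"
      unfolding C_def r_coset_def by auto
    have "(SOME l. l \<in> C) y = \<omega> x"
      using w lam Os Ls AutoGroup_mult_app[of \<omega> G la y] yc by auto
    then have "F (aut_orbit \<Lambda> x, C) = aut_orbit \<Omega> (\<omega> x)"
      unfolding F_def using y_def by simp
    also have "\<dots> = z" using orbit_shift[OF G O xc w(1)] x by simp
    finally show "z \<in> F ` (aut_orbit \<Lambda> ` ?B \<times> ?R)" using CR x by force
  qed
  then have "card (aut_orbit \<Omega> ` ?B) \<le> card (F ` (aut_orbit \<Lambda> ` ?B \<times> ?R))"
    using fin R by (intro card_mono) auto
  also have "\<dots> \<le> card (aut_orbit \<Lambda> ` ?B \<times> ?R)"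
    using fin R by (intro card_image_le) auto
  also have "\<dots> = card ?R * card (aut_orbit \<Lambda> ` ?B)"
    by (simp add: card_cartesian_product)
  finally show ?thesis .
qed

theorem mainTheorem16:
  fixes G :: "('a, 'b) monoid_scheme" and S :: "'a set"
    and \<Omega> \<Lambda> :: "('a \<Rightarrow> 'a) set"
  assumes "group G"
    and "finite S" and "S \<subseteq> carrier G" and "generate G S = carrier G"
    and "subgroup \<Lambda> (AutoGroup G)" and "subgroup \<Omega> (AutoGroup G)" and "\<Omega> \<subseteq> \<Lambda>"
    and "finite (rcosets\<^bsub>(AutoGroup G)\<lparr>carrier := \<Lambda>\<rparr>\<^esub> \<Omega>)"
  shows "aut_growth G S \<Omega> \<sim>\<^sub>g aut_growth G S \<Lambda>"
proof -
  define k where "k = card (rcosets\<^bsub>(AutoGroup G)\<lparr>carrier := \<Lambda>\<rparr>\<^esub> \<Omega>)"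
  define c where "c = max k 1"
  have eO: "\<And>n. aut_growth G S \<Omega> n = card (aut_orbit \<Omega> ` word_ball G S n)"
    by (rule aut_growth_eq[OF assms(1,3)]) (use assms in auto)
  have eL: "\<And>n. aut_growth G S \<Lambda> n = card (aut_orbit \<Lambda> ` word_ball G S n)"
    by (rule aut_growth_eq[OF assms(1,3)]) (use assms in auto)
  have "aut_growth G S \<Omega> \<preceq>\<^sub>g aut_growth G S \<Lambda>"
    unfolding growth_le_def
  proof (intro exI[of _ c] conjI allI)
    show "c \<noteq> 0" by (simp add: c_def)
    fix n
    have "aut_growth G S \<Omega> n \<le> k * aut_growth G S \<Lambda> n"
      unfolding eO eL k_def by (rule dir2[OF assms(1,3,2,5,6,7,8)])
    also have "\<dots> \<le> c * aut_growth G S \<Lambda> n" by (simp add: c_def)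
    also have "\<dots> \<le> c * aut_growth G S \<Lambda> (c * n + c)"
    proof -
      have "c \<ge> 1" by (simp add: c_def)
      then have "n \<le> c * n + c" by (metis le_add1 mult_1 mult_le_mono1 le_trans)
      then show ?thesis unfolding eL using orbit_card_mono[OF assms(2), of n "c * n + c"]
        by (intro mult_le_mono2) auto
    qed
    finally show "aut_growth G S \<Omega> n \<le> c * aut_growth G S \<Lambda> (c * n + c) + c" by simp
  qed
  moreover have "aut_growth G S \<Lambda> \<preceq>\<^sub>g aut_growth G S \<Omega>"
    unfolding growth_le_def
  proof (intro exI[of _ "1::nat"] conjI allI)
    fix n
    have "aut_growth G S \<Lambda> n \<le> aut_growth G S \<Omega> n"
      unfolding eO eL by (rule dir1[OF assms(1,3,2,5,6,7)])
    also have "\<dots> \<le> aut_growth G S \<Omega> (1 * n + 1)"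
      unfolding eO using orbit_card_mono[OF assms(2), of n "1 * n + 1"] by simp
    finally show "aut_growth G S \<Lambda> n \<le> 1 * aut_growth G S \<Omega> (1 * n + 1) + 1" by simp
  qed simp
  ultimately show ?thesis unfolding growth_equiv_def by simp
qed

end
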